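(* Let $n,d\in\mathbb N$, $t\in[0,1]$, weights $\omega_0,\ldots,\omega_n>0$ and points $\mathbf W_0,\ldots,\mathbf W_n\in\mathbb R^d$ be given. Let $B^n_k(t):=\binom nk t^k(1-t)^{n-k}$ and $$\mathbf R_n(t):=\frac{\sum_{k=0}^n\omega_k\mathbf W_kB^n_k(t)}{\sum_{k=0}^n\omega_kB^n_k(t)}.$$ Define $h_0:=1$, $\mathbf Q_0:=\mathbf W_0$ and, for $k=1,\ldots,n$, $$h_k:=\frac{\omega_kh_{k-1}t(n-k+1)}{\omega_{k-1}k(1-t)+\omega_kh_{k-1}t(n-k+1)},\qquad \mathbf Q_k:=(1-h_k)\mathbf Q_{k-1}+h_k\mathbf W_k.$$ Then for all $k=0,1,\ldots,n$: $h_k\in[0,1]$, $\mathbf Q_k\in\mathbb R^d$, and $\mathbf Q_k\in\operatorname{conv}\{\mathbf W_0,\ldots,\mathbf W_k\}$ (so $\operatorname{conv}\{\mathbf Q_0,\ldots,\mathbf Q_k\}\subseteq\operatorname{conv}\{\mathbf W_0,\ldots,\mathbf W_k\}$). Moreover, $\mathbf R_n(t)=\mathbf Q_n$.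
   Context: $\operatorname{conv}$ denotes the convex hull; $\mathbb E^d$ of the paper is identified with $\mathbb R^d$. $\mathbf R_n$ is the rational Bézier curve of degree $n$ with the given weights and control points. *)

theory Defs
  imports "HOL-Analysis.Analysis"
begin

definition rbezier :: "nat \<Rightarrow> (nat \<Rightarrow> real) \<Rightarrow> (nat \<Rightarrow> 'a::real_vector) \<Rightarrow> real \<Rightarrow> 'a" where
  "rbezier n w W t =
     inverse (\<Sum>k\<le>n. w k * Bernstein n k t) *\<^sub>R (\<Sum>k\<le>n. (w k * Bernstein n k t) *\<^sub>R W k)"

fun hseq :: "nat \<Rightarrow> (nat \<Rightarrow> real) \<Rightarrow> real \<Rightarrow> nat \<Rightarrow> real" where
  "hseq n w t 0 = 1"
| "hseq n w t (Suc k) =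
     (w (Suc k) * hseq n w t k * t * (real n - real k)) /
     (w k * real (Suc k) * (1 - t) + w (Suc k) * hseq n w t k * t * (real n - real k))"

fun Qseq :: "nat \<Rightarrow> (nat \<Rightarrow> real) \<Rightarrow> (nat \<Rightarrow> 'a::real_vector) \<Rightarrow> real \<Rightarrow> nat \<Rightarrow> 'a" where
  "Qseq n w W t 0 = W 0"
| "Qseq n w W t (Suc k) = (1 - hseq n w t (Suc k)) *\<^sub>R Qseq n w W t k + hseq n w t (Suc k) *\<^sub>R W (Suc k)"

end

theory Submission
  imports Defs
begin

lemma binom_id: "k < n \<Longrightarrow> (n - k) * (n choose k) = Suc k * (n choose Suc k)"
proof -
  assume "k < n"
  then obtain m where n: "n = Suc m" by (cases n) auto
  show ?thesis using binomial_absorb_comp[of n k] Suc_times_binomial[of k m] n by simp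
qed

lemma bern_id:
  assumes "k < n"
  shows "Bernstein n k t * t * (real n - real k) = Bernstein n (Suc k) t * real (Suc k) * (1 - t)"
proof -
  have e: "real (n - k) * real (n choose k) = real (Suc k) * real (n choose Suc k)"
    using binom_id[OF assms] by (metis of_nat_mult)
  have p: "(1 - t) ^ (n - k) = (1 - t) ^ (n - Suc k) * (1 - t)"
    using assms by (metis Suc_diff_Suc power_Suc2)
  have "Bernstein n k t * t * (real n - real k)
      = (real (n - k) * real (n choose k)) * t ^ Suc k * (1 - t) ^ (n - k)"
    using assms by (simp add: Bernstein_def of_nat_diff algebra_simps)
  also have "\<dots> = (real (Suc k) * real (n choose Suc k)) * t ^ Suc k * ((1 - t) ^ (n - Suc k) * (1 - t))"
    using e p by simp
  also have "\<dots> = Bernstein n (Suc k) t * real (Suc k) * (1 - t)"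
    by (simp add: Bernstein_def algebra_simps)
  finally show ?thesis .
qed

lemma h_range:
  assumes "t \<in> {0..1}" and "\<And>k. k \<le> n \<Longrightarrow> w k > 0"
  shows "k \<le> n \<Longrightarrow> hseq n w t k \<in> {0..1}"
proof (induction k)
  case 0 then show ?case by simp
next
  case (Suc k)
  have h: "0 \<le> hseq n w t k" using Suc by auto
  define a where "a = w (Suc k) * hseq n w t k * t * (real n - real k)"
  define b where "b = w k * real (Suc k) * (1 - t)"
  have wp: "w (Suc k) > 0" "w k > 0" using assms(2) Suc.prems by auto
  have nk: "real n - real k \<ge> 0" using Suc.prems by simp
  have t: "0 \<le> t" "t \<le> 1" using assms(1) by auto
  have a: "a \<ge> 0" unfolding a_def using h wp nk t by simp
  have b: "b \<ge> 0" unfolding b_def using wp t by simp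
  have "hseq n w t (Suc k) = a / (b + a)" by (simp add: a_def b_def)
  moreover have "a / (b + a) \<in> {0..1}"
    using a b by (cases "b + a = 0") (auto simp: divide_le_eq_1)
  ultimately show ?case by simp
qed

lemma Q_hull:
  assumes "t \<in> {0..1}" and "\<And>k. k \<le> n \<Longrightarrow> w k > 0"
  shows "k \<le> n \<Longrightarrow> Qseq n w W t k \<in> convex hull (W ` {0..k})"
proof (induction k)
  case 0 then show ?case by (simp add: hull_inc)
next
  case (Suc k)
  have hr: "hseq n w t (Suc k) \<in> {0..1}" using h_range[OF assms Suc.prems] .
  have "convex hull (W ` {0..k}) \<subseteq> convex hull (W ` {0..Suc k})"
    by (intro hull_mono image_mono) auto
  then have q: "Qseq n w W t k \<in> convex hull (W ` {0..Suc k})" using Suc by auto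
  have ww: "W (Suc k) \<in> convex hull (W ` {0..Suc k})" by (intro hull_inc) auto
  show ?case using convexD_alt[OF convex_convex_hull q ww, of "hseq n w t (Suc k)"] hr
    by simp
qed

lemma main_inv:
  assumes "t \<in> {0..1}" "t \<noteq> 1" and "\<And>k. k \<le> n \<Longrightarrow> w k > 0"
  shows "k \<le> n \<Longrightarrow> (\<Sum>j\<le>k. w j * Bernstein n j t) * hseq n w t k = w k * Bernstein n k t
     \<and> (\<Sum>j\<le>k. w j * Bernstein n j t) *\<^sub>R Qseq n w W t k = (\<Sum>j\<le>k. (w j * Bernstein n j t) *\<^sub>R W j)"
proof (induction k)
  case 0 then show ?case by (simp add: Bernstein_def)
next
  case (Suc k)
  define S where "S = (\<Sum>j\<le>k. w j * Bernstein n j t)"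
  define S' where "S' = (\<Sum>j\<le>Suc k. w j * Bernstein n j t)"
  define B where "B = Bernstein n k t"
  define B' where "B' = Bernstein n (Suc k) t"
  define h where "h = hseq n w t k"
  define h' where "h' = hseq n w t (Suc k)"
  define a where "a = w (Suc k) * h * t * (real n - real k)"
  define b where "b = w k * real (Suc k) * (1 - t)"
  have IH: "S * h = w k * B" "S *\<^sub>R Qseq n w W t k = (\<Sum>j\<le>k. (w j * Bernstein n j t) *\<^sub>R W j)"
    using Suc by (auto simp: S_def h_def B_def)
  have hh: "h' = a / (b + a)" by (simp add: a_def b_def h_def h'_def)
  have t: "0 \<le> t" "t < 1" using assms by auto
  have h0: "0 \<le> h" using h_range[OF assms(1,3), where k=k] Suc.prems by (auto simp: h_def)
  have bpos: "b > 0" unfolding b_def using t assms(3)[of k] Suc.prems by auto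
  have wp: "w (Suc k) > 0" using assms(3) Suc.prems by auto
  have nk: "real n - real k \<ge> 0" using Suc.prems by simp
  have apos: "a \<ge> 0" unfolding a_def using h0 t wp nk by simp
  have S'e: "S' = S + w (Suc k) * B'" by (simp add: S'_def S_def B'_def)
  have bid: "B * t * (real n - real k) = B' * real (Suc k) * (1 - t)"
    using bern_id[of k n t] Suc.prems by (simp add: B_def B'_def)
  have Sa: "S * a = w (Suc k) * B' * b"
  proof -
    have "S * a = w (Suc k) * (S * h) * t * (real n - real k)" by (simp add: a_def algebra_simps)
    also have "\<dots> = w (Suc k) * w k * (B * t * (real n - real k))" by (simp add: IH algebra_simps)
    also have "\<dots> = w (Suc k) * w k * (B' * real (Suc k) * (1 - t))" by (simp only: bid)
    also have "\<dots> = w (Suc k) * B' * b" by (simp add: b_def algebra_simps)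
    finally show ?thesis .
  qed
  have c1: "S' * h' = w (Suc k) * B'"
  proof -
    have "S' * h' = (S + w (Suc k) * B') * a / (b + a)" by (simp add: S'e hh)
    also have "\<dots> = (w (Suc k) * B' * b + w (Suc k) * B' * a) / (b + a)"
      by (simp add: Sa distrib_right)
    also have "\<dots> = w (Suc k) * B'" using bpos apos by (simp add: field_simps)
    finally show ?thesis .
  qed
  have c2: "S' *\<^sub>R Qseq n w W t (Suc k) = (\<Sum>j\<le>Suc k. (w j * Bernstein n j t) *\<^sub>R W j)"
  proof -
    have "S' *\<^sub>R Qseq n w W t (Suc k) = (S' - S' * h') *\<^sub>R Qseq n w W t k + (S' * h') *\<^sub>R W (Suc k)"
      by (simp add: h'_def algebra_simps)
    also have "\<dots> = S *\<^sub>R Qseq n w W t k + (w (Suc k) * B') *\<^sub>R W (Suc k)"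
      using c1 S'e by simp
    finally show ?thesis using IH(2) by (simp add: B'_def)
  qed
  show ?case using c1 c2 by (simp add: S'_def h'_def B'_def)
qed

lemma t1_h: "\<And>k. k \<le> n \<Longrightarrow> (\<And>k. k \<le> n \<Longrightarrow> w k > 0) \<Longrightarrow> hseq n w 1 k > 0"
proof -
  fix k assume "k \<le> n" "\<And>k. k \<le> n \<Longrightarrow> w k > 0"
  then show "hseq n w 1 k > 0"
  proof (induction k)
    case 0 then show ?case by simp
  next
    case (Suc k)
    then have p: "hseq n w 1 k > 0" "w (Suc k) > 0" "real n - real k > 0" by auto
    then have "w (Suc k) * hseq n w 1 k * 1 * (real n - real k) > 0" by simp
    then show ?case using p by (simp del: hseq.simps add: hseq.simps(2))
  qed
qed

lemma t1_Q: "\<And>k. k \<le> n \<Longrightarrow> (\<And>k. k \<le> n \<Longrightarrow> w k > 0) \<Longrightarrow> Qseq n w W 1 k = W k"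
proof -
  fix k assume "k \<le> n" "\<And>k. k \<le> n \<Longrightarrow> w k > 0"
  then show "Qseq n w W 1 k = W k"
  proof (induction k)
    case 0 then show ?case by simp
  next
    case (Suc k)
    then have p: "hseq n w 1 k > 0" "w (Suc k) > 0" "real n - real k > 0"
      using t1_h[of k n w] by auto
    then have "w (Suc k) * hseq n w 1 k * 1 * (real n - real k) > 0" by simp
    then have "hseq n w 1 (Suc k) = 1" using p by (simp del: hseq.simps add: hseq.simps(2))
    then show ?case by simp
  qed
qed

theorem theorem3:
  fixes n :: nat and t :: real and w :: "nat \<Rightarrow> real" and W :: "nat \<Rightarrow> real ^ 'd"
  assumes "t \<in> {0..1}"
    and "\<And>k. k \<le> n \<Longrightarrow> w k > 0"
  shows "(\<forall>k\<le>n. hseq n w t k \<in> {0..1}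
                 \<and> Qseq n w W t k \<in> convex hull (W ` {0..k})
                 \<and> convex hull (Qseq n w W t ` {0..k}) \<subseteq> convex hull (W ` {0..k}))
         \<and> rbezier n w W t = Qseq n w W t n"
proof (intro conjI allI impI)
  fix k assume k: "k \<le> n"
  show "hseq n w t k \<in> {0..1}" using h_range[OF assms k] .
  show "Qseq n w W t k \<in> convex hull (W ` {0..k})" using Q_hull[OF assms k] .
  show "convex hull (Qseq n w W t ` {0..k}) \<subseteq> convex hull (W ` {0..k})"
  proof (rule hull_minimal)
    show "Qseq n w W t ` {0..k} \<subseteq> convex hull (W ` {0..k})"
    proof
      fix x assume "x \<in> Qseq n w W t ` {0..k}"
      then obtain j where j: "j \<le> k" "x = Qseq n w W t j" by auto
      have "convex hull (W ` {0..j}) \<subseteq> convex hull (W ` {0..k})"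
        using j by (intro hull_mono image_mono) auto
      then show "x \<in> convex hull (W ` {0..k})" using Q_hull[where t=t and n=n and w=w and W=W and k=j, OF assms] j k by auto
    qed
  qed simp
next
  show "rbezier n w W t = Qseq n w W t n"
  proof (cases "t = 1")
    case True
    have s1: "(\<Sum>k\<le>n. w k * Bernstein n k t) = w n"
      by (subst sum.remove[of _ n]) (auto simp: True Bernstein_def intro!: sum.neutral)
    have s2: "(\<Sum>k\<le>n. (w k * Bernstein n k t) *\<^sub>R W k) = w n *\<^sub>R W n"
      by (subst sum.remove[of _ n]) (auto simp: True Bernstein_def intro!: sum.neutral)
    have wn: "w n > 0" using assms(2) by simp
    show ?thesis unfolding rbezier_def s1 s2 using t1_Q[of n n w W] assms(2) True
      by (simp add: less_imp_neq[OF wn, symmetric])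
  next
    case False
    have I: "(\<Sum>j\<le>n. w j * Bernstein n j t) *\<^sub>R Qseq n w W t n = (\<Sum>j\<le>n. (w j * Bernstein n j t) *\<^sub>R W j)"
      using main_inv[where k=n and W=W, OF assms(1) False assms(2)] by simp
    have pos: "(\<Sum>j\<le>n. w j * Bernstein n j t) > 0"
    proof -
      have "0 < w 0 * Bernstein n 0 t" using assms False by (auto simp: Bernstein_def)
      also have "\<dots> \<le> (\<Sum>j\<le>n. w j * Bernstein n j t)"
      proof (rule member_le_sum)
        fix x assume "x \<in> {..n} - {0}"
        then have "w x > 0" using assms(2) by auto
        moreover have "Bernstein n x t \<ge> 0" using assms(1) by (simp add: Bernstein_nonneg)
        ultimately show "0 \<le> w x * Bernstein n x t" by simp
      qed auto
      finally show ?thesis .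
    qed
    show ?thesis unfolding rbezier_def I[symmetric] using pos by simp
  qed
qed

end
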